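(* If $A$ is a finite set of relatively prime positive integers, then there exists an $\mathcal{N}$-set $K\subseteq\mathbb{R}$ such that $A=(K-K)\cap\mathbb{N}$.
   Context: $\mathbb{N}$ denotes the set of positive integers. $K-K=\{x-y : x,y\in K\}$. A set of integers is relatively prime if it is nonempty and its elements have no common factor greater than $1$. An $\mathcal{N}$-set in $\mathbb{R}^n$ is a compact set $K\subseteq\mathbb{R}^n$ such that for every $x\in\mathbb{R}^n$ there exists $y\in K$ with $x-y\in\mathbb{Z}^n$. *)

theory Defs
  imports "HOL-Analysis.Analysis"
begin

definition N_set :: "real set \<Rightarrow> bool" where
  "N_set K \<longleftrightarrow> compact K \<and> (\<forall>x::real. \<exists>y\<in>K. x - y \<in> \<int>)"

definition rel_prime_set :: "nat set \<Rightarrow> bool" where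
  "rel_prime_set A \<longleftrightarrow> A \<noteq> {} \<and> (\<forall>d::nat. (\<forall>a\<in>A. d dvd a) \<longrightarrow> d = 1)"

definition diff_set :: "real set \<Rightarrow> real set" where
  "diff_set K = {x - y | x y. x \<in> K \<and> y \<in> K}"

end

theory Submission
  imports Defs
begin

definition nn :: "int list \<Rightarrow> nat \<Rightarrow> int" where "nn ds j = sum_list (take j ds)"

definition piece :: "int list \<Rightarrow> nat \<Rightarrow> real set" where
  "piece ds j = {real j / real (length ds) + of_int (nn ds j) .. real (Suc j) / real (length ds) + of_int (nn ds j)}"

definition Kset :: "int list \<Rightarrow> real set" where
  "Kset ds = (\<Union>j<length ds. piece ds j)"

lemma nn_Suc: "j < length ds \<Longrightarrow> nn ds (Suc j) = nn ds j + ds!j"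
  by (simp add: nn_def take_Suc_conv_app_nth)

lemma nn_0[simp]: "nn ds 0 = 0" by (simp add: nn_def)

lemma nn_len: "nn ds (length ds) = sum_list ds" by (simp add: nn_def)

lemma Kset_compact: "compact (Kset ds)"
  unfolding Kset_def piece_def by (intro compact_UN) auto

lemma Kset_cover:
  assumes "ds \<noteq> []"
  shows "\<exists>y\<in>Kset ds. x - y \<in> \<int>"
proof -
  define L where "L = length ds"
  have L: "L > 0" using assms by (simp add: L_def)
  define f where "f = x - of_int (floor x)"
  have f0: "0 \<le> f" and f1: "f < 1" unfolding f_def by linarith+
  define j where "j = nat (floor (f * real L))"
  have fl0: "0 \<le> floor (f * real L)" using f0 by simp
  have "real j \<le> f * real L" unfolding j_def using fl0 by linarith
  hence jle: "real j / real L \<le> f" using L by (simp add: divide_simps mult.commute)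
  have "f * real L < real j + 1" unfolding j_def using fl0 by linarith
  hence jge: "f \<le> real (Suc j) / real L" using L by (simp add: divide_simps mult.commute)
  have "f * real L < real L" using f1 L by simp
  hence "real j < real L" using \<open>real j \<le> f * real L\<close> by linarith
  hence jL: "j < L" by simp
  define y where "y = f + of_int (nn ds j)"
  have "y \<in> piece ds j" unfolding piece_def y_def using jle jge L_def by auto
  hence "y \<in> Kset ds" unfolding Kset_def using jL L_def by auto
  moreover have "x - y = of_int (floor x - nn ds j)" unfolding y_def f_def by simp
  ultimately show ?thesis by (metis Ints_of_int)
qed

lemma piece_bounds:
  assumes "x \<in> piece ds j" "j < length ds"
  shows "real j / real (length ds) \<le> x - of_int (nn ds j)"
    "x - of_int (nn ds j) \<le> real (Suc j) / real (length ds)"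
    "0 \<le> x - of_int (nn ds j)" "x - of_int (nn ds j) \<le> 1"
proof -
  show a: "real j / real (length ds) \<le> x - of_int (nn ds j)"
    "x - of_int (nn ds j) \<le> real (Suc j) / real (length ds)"
    using assms(1) unfolding piece_def by auto
  have "0 \<le> real j / real (length ds)" by simp
  then show "0 \<le> x - of_int (nn ds j)" using a by linarith
  have "real (Suc j) / real (length ds) \<le> 1" using assms(2) by (simp add: divide_simps)
  then show "x - of_int (nn ds j) \<le> 1" using a by linarith
qed

lemma le_div_cancel:
  assumes "real j / real L \<le> real k / real L" "L > 0"
  shows "j \<le> k"
proof -
  have "real j \<le> real k" using assms by (simp add: divide_simps)
  thus ?thesis by simp
qed

lemma Kset_diff:
  assumes sum: "sum_list ds = -1" and x: "x \<in> Kset ds" and y: "y \<in> Kset ds"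
    and xy: "x - y = of_int z"
  shows "z = 0 \<or> (\<exists>d\<in>set ds. \<bar>z\<bar> = \<bar>d\<bar>)"
proof -
  define L where "L = length ds"
  obtain j where j: "j < L" "x \<in> piece ds j" using x unfolding Kset_def L_def by auto
  obtain k where k: "k < L" "y \<in> piece ds k" using y unfolding Kset_def L_def by auto
  have L: "L > 0" using j by simp
  define s where "s = x - of_int (nn ds j)"
  define t where "t = y - of_int (nn ds k)"
  note bj = piece_bounds[OF j(2) j(1)[unfolded L_def], folded s_def L_def]
  note bk = piece_bounds[OF k(2) k(1)[unfolded L_def], folded t_def L_def]
  define w where "w = z - nn ds j + nn ds k"
  have sw: "s - t = of_int w" unfolding w_def s_def t_def using xy by simp
  have "of_int w \<le> (1::real)" "(-1::real) \<le> of_int w" using sw bj bk by linarith+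
  hence "w \<le> 1" "-1 \<le> w" by linarith+
  hence "w = 0 \<or> w = 1 \<or> w = -1" by linarith
  have lastnn: "nn ds (L - 1) + ds!(L-1) = -1"
    using nn_Suc[of "L-1" ds] L nn_len[of ds] sum unfolding L_def by simp
  have lastin: "ds!(L-1) \<in> set ds" using L unfolding L_def by simp
  consider "w = 0" | "w = 1" | "w = -1" using \<open>w = 0 \<or> w = 1 \<or> w = -1\<close> by blast
  then show ?thesis
  proof cases
    case 1
    hence st: "s = t" using sw by simp
    have "real j / real L \<le> real (Suc k) / real L" using bj(1) bk(2) st by linarith
    hence "j \<le> Suc k" using le_div_cancel L by blast
    moreover have "real k / real L \<le> real (Suc j) / real L" using bk(1) bj(2) st by linarith
    hence "k \<le> Suc j" using le_div_cancel L by blast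
    ultimately consider "j = k" | "k = Suc j" | "j = Suc k" by linarith
    then show ?thesis
    proof cases
      case 1 then show ?thesis using \<open>w = 0\<close> w_def by simp
    next
      case 2
      have "z = - ds!j" using \<open>w = 0\<close> w_def nn_Suc[of j ds] 2 k(1) L_def by simp
      moreover have "ds!j \<in> set ds" using 2 k(1) L_def by simp
      ultimately show ?thesis by force
    next
      case 3
      have "z = ds!k" using \<open>w = 0\<close> w_def nn_Suc[of k ds] 3 j(1) L_def by simp
      moreover have "ds!k \<in> set ds" using k(1) L_def by simp
      ultimately show ?thesis by force
    qed
  next
    case 2
    hence "s = 1" "t = 0" using sw bj bk by auto
    hence "1 \<le> real (Suc j) / real L" "real k / real L \<le> 0" using bj bk by auto
    hence "L \<le> Suc j" "k = 0" using L by (auto simp: divide_simps)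
    hence "j = L - 1" using j by linarith
    hence "z = - ds!(L-1)" using 2 w_def \<open>k = 0\<close> lastnn by simp
    then show ?thesis using lastin by force
  next
    case 3
    hence "s = 0" "t = 1" using sw bj bk by auto
    hence "1 \<le> real (Suc k) / real L" "real j / real L \<le> 0" using bj bk by auto
    hence "L \<le> Suc k" "j = 0" using L by (auto simp: divide_simps)
    hence "k = L - 1" using k by linarith
    hence "z = ds!(L-1)" using 3 w_def \<open>j = 0\<close> lastnn by simp
    then show ?thesis using lastin by force
  qed
qed

lemma Kset_realize:
  assumes sum: "sum_list ds = -1" and jL: "j < length ds"
  shows "\<exists>x\<in>Kset ds. \<exists>y\<in>Kset ds. x - y = of_int (- ds!j)"
proof -
  define L where "L = length ds"
  have L: "L > 0" using jL unfolding L_def by linarith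
  show ?thesis
  proof (cases "Suc j < L")
    case True
    define p where "p = real (Suc j) / real L"
    have "p + of_int (nn ds (Suc j)) \<in> piece ds (Suc j)"
      unfolding piece_def p_def L_def by (auto simp: divide_simps)
    moreover have "p + of_int (nn ds j) \<in> piece ds j"
      unfolding piece_def p_def L_def using L by (auto simp: divide_simps)
    ultimately have "p + of_int (nn ds (Suc j)) \<in> Kset ds" "p + of_int (nn ds j) \<in> Kset ds"
      unfolding Kset_def using True jL L_def by auto
    moreover have "(p + of_int (nn ds j)) - (p + of_int (nn ds (Suc j))) = of_int (- ds!j)"
      using nn_Suc[OF jL] by simp
    ultimately show ?thesis by blast
  next
    case False
    hence jj: "j = L - 1" using jL L_def by simp
    have lastnn: "nn ds (L - 1) + ds!(L-1) = -1"
      using nn_Suc[of "L-1" ds] L nn_len[of ds] sum unfolding L_def by simp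
    have e1: "real (Suc j) / real L = 1" using jj L by simp
    have e2: "real j / real L \<le> 1" using jL L_def by (simp add: divide_simps)
    have "1 + of_int (nn ds j) \<in> piece ds j"
      unfolding piece_def using e1 e2 L_def by auto
    moreover have "0 \<in> piece ds 0" unfolding piece_def by auto
    ultimately have "1 + of_int (nn ds j) \<in> Kset ds" "0 \<in> Kset ds"
      unfolding Kset_def using jL L L_def by auto
    moreover have "(1 + of_int (nn ds j)) - 0 = (of_int (- ds!j) :: real)"
    proof -
      have "1 + nn ds j = - ds!j" using lastnn jj by simp
      thus ?thesis by (metis add.commute of_int_1 of_int_add diff_zero)
    qed
    ultimately show ?thesis by blast
  qed
qed


lemma sum_list_concat': "sum_list (concat xss) = sum_list (map sum_list (xss :: int list list))"
  by (induction xss) auto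

lemma sum_list_uminus': "sum_list (map uminus xs) = - sum_list (xs :: int list)"
  by (induction xs) auto

lemma bezout_list:
  assumes "finite A"
  shows "\<exists>ds. (\<forall>d\<in>set ds. \<exists>a\<in>A. d = int a \<or> d = - int a) \<and> sum_list ds = int (Gcd A)"
  using assms
proof (induction A rule: finite_induct)
  case empty
  show ?case by (rule exI[of _ "[]"]) simp
next
  case (insert a A)
  then obtain ds where ds: "\<forall>d\<in>set ds. \<exists>a\<in>A. d = int a \<or> d = - int a" "sum_list ds = int (Gcd A)"
    by blast
  obtain u v where uv: "u * int a + v * int (Gcd A) = gcd (int a) (int (Gcd A))"
    using bezout_int by blast
  define ds' where "ds' = replicate (nat \<bar>u\<bar>) (sgn u * int a) @ concat (replicate (nat \<bar>v\<bar>) (map (\<lambda>d. sgn v * d) ds))"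
  have "sum_list ds' = u * int a + v * int (Gcd A)"
  proof -
    have "sum_list ds' = int (nat \<bar>u\<bar>) * (sgn u * int a) + int (nat \<bar>v\<bar>) * (sgn v * sum_list ds)"
      unfolding ds'_def by (simp add: sum_list_replicate sum_list_concat' sum_list_const_mult)
    also have "\<dots> = u * int a + v * int (Gcd A)"
      using ds(2) by (simp add: abs_mult_sgn mult.assoc[symmetric])
    finally show ?thesis .
  qed
  also have "\<dots> = int (Gcd (insert a A))" using uv by (simp add: gcd_int_def)
  finally have s: "sum_list ds' = int (Gcd (insert a A))" .
  have "\<forall>d\<in>set ds'. \<exists>b\<in>insert a A. d = int b \<or> d = - int b"
  proof
    fix d assume "d \<in> set ds'"
    then consider "u \<noteq> 0" "d = sgn u * int a" | e where "v \<noteq> 0" "e \<in> set ds" "d = sgn v * e"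
      unfolding ds'_def by (auto split: if_splits)
    then show "\<exists>b\<in>insert a A. d = int b \<or> d = - int b"
    proof cases
      case 1
      then show ?thesis using sgn_if[of u] by (auto split: if_splits)
    next
      case 2
      then obtain b where "b \<in> A" "e = int b \<or> e = - int b" using ds(1) by blast
      then show ?thesis using 2 sgn_if[of v] by (auto split: if_splits)
    qed
  qed
  then show ?case using s by blast
qed

theorem mainTheorem4:
  fixes A :: "nat set"
  assumes "finite A" and "\<forall>a\<in>A. a > 0" and "rel_prime_set A"
  shows "\<exists>K. N_set K \<and> A = {n::nat. n > 0 \<and> real n \<in> diff_set K}"
proof -
  have Ane: "A \<noteq> {}" using assms(3) unfolding rel_prime_set_def by blast
  have "Gcd A = 1" using assms(3) unfolding rel_prime_set_def by auto
  then obtain ds0 where ds0: "\<forall>d\<in>set ds0. \<exists>a\<in>A. d = int a \<or> d = - int a" "sum_list ds0 = 1"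
    using bezout_list[OF assms(1)] by auto
  define ds where "ds = map uminus ds0 @ concat (map (\<lambda>a. [int a, - int a]) (sorted_list_of_set A))"
  have sumds: "sum_list ds = -1"
    unfolding ds_def using ds0(2)
    by (simp add: sum_list_concat' o_def sum_list_uminus')
  have setA: "int a \<in> set ds" if "a \<in> A" for a
    using that assms(1) unfolding ds_def by auto
  have ne: "ds \<noteq> []" using Ane setA by auto
  have elts: "\<exists>a\<in>A. d = int a \<or> d = - int a" if "d \<in> set ds" for d
  proof -
    from that consider e where "e \<in> set ds0" "d = - e" | a where "a \<in> A" "d = int a \<or> d = - int a"
      unfolding ds_def using assms(1) by auto
    then show ?thesis
    proof cases
      case 1 then show ?thesis using ds0(1) by force
    qed blast
  qed
  define K where "K = Kset ds"
  have NK: "N_set K" unfolding N_set_def K_def using Kset_compact Kset_cover[OF ne] by blast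
  have "A = {n::nat. n > 0 \<and> real n \<in> diff_set K}"
  proof (intro set_eqI iffI)
    fix n assume nA: "n \<in> A"
    then obtain j where j: "j < length ds" "ds!j = int n" using setA by (metis in_set_conv_nth)
    obtain x y where "x \<in> K" "y \<in> K" "x - y = of_int (- ds!j)"
      using Kset_realize[OF sumds j(1)] K_def by blast
    hence "real n = y - x" using j(2) by simp
    hence "real n \<in> diff_set K" unfolding diff_set_def using \<open>x \<in> K\<close> \<open>y \<in> K\<close> by blast
    then show "n \<in> {n::nat. n > 0 \<and> real n \<in> diff_set K}" using nA assms(2) by auto
  next
    fix n assume "n \<in> {n::nat. n > 0 \<and> real n \<in> diff_set K}"
    then obtain x y where n: "n > 0" "x \<in> K" "y \<in> K" "real n = x - y"
      unfolding diff_set_def by blast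
    have "x - y = of_int (int n)" using n(4) by simp
    from Kset_diff[OF sumds n(2)[unfolded K_def] n(3)[unfolded K_def] this] n(1)
    obtain d where "d \<in> set ds" "int n = \<bar>d\<bar>" by auto
    then obtain a where "a \<in> A" "d = int a \<or> d = - int a" using elts by blast
    then show "n \<in> A" using \<open>int n = \<bar>d\<bar>\<close> by auto
  qed
  then show ?thesis using NK by blast
qed

end
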